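(* Let $k$ be an integer and $\mathcal{H}$ a hypergraph on $n$ vertices. Then $Tr(\hat{\mathcal{H}}_{k})=\{T\cup\{x\}\mid T\in Tr(\mathcal{H}),\ |T|<n-k+1\}\cup\mathcal{J}$, where $\mathcal{J}$ contains only sets of size at least $n-k+1$.
   Context: For a hypergraph $\mathcal{H}$ with vertex set $V(\mathcal{H})$ ($|V(\mathcal{H})|=n$) and hyperedge set $\mathcal{E}(\mathcal{H})$, $\hat{\mathcal{H}}_{k}$ is the hypergraph with vertex set $V(\mathcal{H})\cup\{x\}$, $x$ a new vertex, and hyperedge set $\mathcal{E}(\mathcal{H})\cup\{X\cup\{x\}\mid X\subseteq V(\mathcal{H}),\ |X|=k\}$. $Tr(\cdot)$ denotes the hypergraph of inclusion-minimal transversals (vertex sets meeting every hyperedge). *)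

theory Defs
  imports Main
begin

definition is_transversal :: "'a set \<Rightarrow> 'a set set \<Rightarrow> 'a set \<Rightarrow> bool" where
  "is_transversal V E T \<longleftrightarrow> T \<subseteq> V \<and> (\<forall>e\<in>E. T \<inter> e \<noteq> {})"

definition Tr :: "'a set \<Rightarrow> 'a set set \<Rightarrow> 'a set set" where
  "Tr V E = {T. is_transversal V E T \<and> (\<forall>T'. T' \<subset> T \<longrightarrow> \<not> is_transversal V E T')}"

text \<open>Hyperedges of the hypergraph hat H_k (vertex set insert x V).\<close>
definition hat_edges :: "'a set \<Rightarrow> 'a set set \<Rightarrow> 'a \<Rightarrow> nat \<Rightarrow> 'a set set" where
  "hat_edges V E x k = E \<union> {insert x X | X. X \<subseteq> V \<and> card X = k}"

end

theory Submission
  imports Defs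
begin

lemma avoid_set:
  assumes "finite V" "S \<subseteq> V" "card S + k \<le> card V"
  shows "\<exists>X. X \<subseteq> V \<and> card X = k \<and> X \<inter> S = {}"
proof -
  have "card (V - S) \<ge> k" using assms by (simp add: card_Diff_subset finite_subset)
  then obtain X where "X \<subseteq> V - S" "card X = k" by (meson obtain_subset_with_card_n)
  then show ?thesis by blast
qed

theorem proposition5:
  fixes V :: "'a set" and E :: "'a set set" and x :: 'a and k n :: nat
  assumes "finite V" and "\<forall>e\<in>E. e \<subseteq> V" and "x \<notin> V" and "card V = n"
  shows "\<exists>J. (\<forall>S\<in>J. int (card S) \<ge> int n - int k + 1) \<and>
    Tr (insert x V) (hat_edges V E x k) =
      {insert x T | T. T \<in> Tr V E \<and> int (card T) < int n - int k + 1} \<union> J"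
proof -
  let ?A = "Tr (insert x V) (hat_edges V E x k)"
  let ?L = "{insert x T | T. T \<in> Tr V E \<and> int (card T) < int n - int k + 1}"
  have a: "insert x T \<in> ?A" if T: "T \<in> Tr V E" and c: "int (card T) < int n - int k + 1" for T
  proof -
    have TV: "T \<subseteq> V" and Tm: "\<forall>e\<in>E. T \<inter> e \<noteq> {}"
      and Tmin: "\<And>T'. T' \<subset> T \<Longrightarrow> \<not> is_transversal V E T'"
      using T by (auto simp: Tr_def is_transversal_def)
    have tr: "is_transversal (insert x V) (hat_edges V E x k) (insert x T)"
      using TV Tm by (auto simp: is_transversal_def hat_edges_def)
    have "\<not> is_transversal (insert x V) (hat_edges V E x k) T'" if "T' \<subset> insert x T" for T'
    proof (cases "x \<in> T'")
      case False
      then have "T' \<subseteq> T" using that by blast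
      obtain X where X: "X \<subseteq> V" "card X = k" "X \<inter> T = {}"
        using avoid_set[OF assms(1) TV, of k] c assms(4) by auto
      have "insert x X \<in> hat_edges V E x k" using X by (auto simp: hat_edges_def)
      moreover have "T' \<inter> insert x X = {}" using X False \<open>T' \<subseteq> T\<close> by blast
      ultimately show ?thesis unfolding is_transversal_def by blast
    next
      case True
      have "T' - {x} \<subset> T" using that True assms(3) TV by blast
      then have "\<not> is_transversal V E (T' - {x})" by (rule Tmin)
      moreover have "T' - {x} \<subseteq> V" using \<open>T' - {x} \<subset> T\<close> TV by blast
      ultimately obtain e where "e \<in> E" "(T' - {x}) \<inter> e = {}" by (auto simp: is_transversal_def)
      moreover have "x \<notin> e" using assms(2,3) \<open>e \<in> E\<close> by blast
      ultimately have "T' \<inter> e = {}" by blast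
      then show ?thesis using \<open>e \<in> E\<close> by (auto simp: is_transversal_def hat_edges_def)
    qed
    then show ?thesis using tr by (simp add: Tr_def)
  qed
  have b: "S \<in> ?L" if S: "S \<in> ?A" and c: "int (card S) < int n - int k + 1" for S
  proof -
    have SV: "S \<subseteq> insert x V" and Sm: "\<forall>e\<in>hat_edges V E x k. S \<inter> e \<noteq> {}"
      and Smin: "\<And>T'. T' \<subset> S \<Longrightarrow> \<not> is_transversal (insert x V) (hat_edges V E x k) T'"
      using S by (auto simp: Tr_def is_transversal_def)
    have xS: "x \<in> S"
    proof (rule ccontr)
      assume "x \<notin> S"
      then have "S \<subseteq> V" using SV by blast
      then obtain X where X: "X \<subseteq> V" "card X = k" "X \<inter> S = {}"
        using avoid_set[OF assms(1), of S k] c assms(4) by auto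
      have "insert x X \<in> hat_edges V E x k" using X by (auto simp: hat_edges_def)
      moreover have "S \<inter> insert x X = {}" using X \<open>x \<notin> S\<close> by blast
      ultimately show False using Sm by blast
    qed
    let ?T = "S - {x}"
    have fS: "finite S" using SV assms(1) finite_subset by blast
    have cT: "card ?T < card S" using xS fS by (meson card_Diff1_less)
    have TV: "?T \<subseteq> V" using SV by blast
    have Tm: "\<forall>e\<in>E. ?T \<inter> e \<noteq> {}"
    proof
      fix e assume "e \<in> E"
      then have "S \<inter> e \<noteq> {}" "x \<notin> e" using Sm assms(2,3) by (auto simp: hat_edges_def)
      then show "?T \<inter> e \<noteq> {}" by blast
    qed
    have "\<not> is_transversal V E T'" if "T' \<subset> ?T" for T'
    proof
      assume "is_transversal V E T'"
      then have "T' \<subseteq> V" "\<forall>e\<in>E. T' \<inter> e \<noteq> {}" by (auto simp: is_transversal_def)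
      then have "is_transversal (insert x V) (hat_edges V E x k) (insert x T')"
        by (auto simp: is_transversal_def hat_edges_def)
      moreover have "insert x T' \<subset> S" using that xS assms(3) \<open>T' \<subseteq> V\<close> by blast
      ultimately show False using Smin by blast
    qed
    then have "?T \<in> Tr V E" using TV Tm by (simp add: Tr_def is_transversal_def)
    moreover have "S = insert x ?T" using xS by blast
    moreover have "int (card ?T) < int n - int k + 1" using cT c by linarith
    ultimately show ?thesis by blast
  qed
  let ?J = "{S \<in> ?A. int (card S) \<ge> int n - int k + 1}"
  have "?A = ?L \<union> ?J"
  proof
    show "?A \<subseteq> ?L \<union> ?J"
    proof
      fix S assume "S \<in> ?A"
      then show "S \<in> ?L \<union> ?J"
        using b[of S] by (cases "int (card S) < int n - int k + 1") auto
    qed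
    show "?L \<union> ?J \<subseteq> ?A" using a by blast
  qed
  then show ?thesis by (intro exI[of _ ?J]) auto
qed

end
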